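(* Let $a_c>b_c>0$, $k_e>0$, $a_e^2=a_c^2+k_e$, $b_e^2=b_c^2+k_e$, let $c$ be the ellipse $x^2/a_c^2+y^2/b_c^2=1$, $e$ the ellipse $x^2/a_e^2+y^2/b_e^2=1$, and let $\alpha(x,y)=\bigl(\frac{a_e}{a_c}x,\frac{b_e}{b_c}y\bigr)$, so $\alpha(c)=e$. Let $\dots P_0P_1P_2\dots$ be a billiard in $e$ with caustic $c$ whose side $[P_i,P_{i+1}]$ touches $c$ at $Q_i$. Then there exists a unique billiard $\dots P_0'P_1'P_2'\dots$ in $e$ with caustic $c$ that is conjugate to it, namely $P_i'=\alpha(Q_i)$ for all $i$, and the relation is symmetric: if $Q_i'$ denotes the point where $[P_i',P_{i+1}']$ touches $c$, then $\alpha(Q_{i-1}')=P_i$ for all $i$. Moreover, for all $i$, $$l_i=\overline{P_iQ_i}=\overline{P_i'Q_{i-1}'}=r_i'\quad\text{and}\quad r_i=\overline{P_iQ_{i-1}}=\overline{P_{i-1}'Q_{i-1}'}=l_{i-1}',$$ where $\overline{XY}$ denotes the Euclidean distance.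
   Context: A billiard in $e$ with caustic $c$ is a sequence $(P_i)_{i\in\mathbb Z}$ of points of $e$ with $P_{i+1}\neq P_i$ such that every line $[P_i,P_{i+1}]$ is tangent to $c$ and $[P_{i-1},P_i]\neq[P_i,P_{i+1}]$. A billiard $\dots P_0'P_1'P_2'\dots$ in $e$ with caustic $c$ is called conjugate to $\dots P_0P_1P_2\dots$ if $\alpha$ maps the contact point $Q_i$ of the side $[P_i,P_{i+1}]$ with $c$ to $P_i'$ for every $i$. Notation: $l_i=\overline{P_iQ_i}$, $r_i=\overline{P_iQ_{i-1}}$, and $l_i',r_i'$ are the analogous quantities for the conjugate billiard. *)

theory Defs
  imports "HOL-Analysis.Analysis"
begin

text \<open>Points of the plane are pairs of reals; the product metric on real \<times> real
is the Euclidean distance, so dist X Y is the length of segment XY.\<close>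

definition on_ellipse :: "real \<Rightarrow> real \<Rightarrow> real \<times> real \<Rightarrow> bool" where
  "on_ellipse a b X \<longleftrightarrow> (fst X)^2 / a^2 + (snd X)^2 / b^2 = 1"

definition line_through :: "real \<times> real \<Rightarrow> real \<times> real \<Rightarrow> (real \<times> real) set" where
  "line_through X Y = {X + t *\<^sub>R (Y - X) | t. True}"

text \<open>The line L is tangent to the ellipse x^2/a^2+y^2/b^2=1 at the contact point Q:
Q lies on the ellipse and on L, and the direction of L is orthogonal to the
normal (x/a^2, y/b^2) of the ellipse at Q.\<close>
definition tangent_at :: "real \<Rightarrow> real \<Rightarrow> real \<times> real \<Rightarrow> real \<times> real \<Rightarrow> real \<times> real \<Rightarrow> bool" where
  "tangent_at a b X Y Q \<longleftrightarrow> on_ellipse a b Q \<and> Q \<in> line_through X Y \<and>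
     (fst Y - fst X) * fst Q / a^2 + (snd Y - snd X) * snd Q / b^2 = 0"

definition billiard :: "real \<Rightarrow> real \<Rightarrow> real \<Rightarrow> real \<Rightarrow> (int \<Rightarrow> real \<times> real) \<Rightarrow> bool" where
  "billiard ae be ac bc P \<longleftrightarrow>
     (\<forall>i. on_ellipse ae be (P i)) \<and>
     (\<forall>i. P (i + 1) \<noteq> P i) \<and>
     (\<forall>i. \<exists>Q. tangent_at ac bc (P i) (P (i + 1)) Q) \<and>
     (\<forall>i. line_through (P (i - 1)) (P i) \<noteq> line_through (P i) (P (i + 1)))"

definition alpha_map :: "real \<Rightarrow> real \<Rightarrow> real \<Rightarrow> real \<Rightarrow> real \<times> real \<Rightarrow> real \<times> real" where
  "alpha_map ae be ac bc X = (ae / ac * fst X, be / bc * snd X)"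

text \<open>P' is conjugate to P, where Q i is the contact point of side [P i, P (i+1)] with c.\<close>
definition conjugate :: "real \<Rightarrow> real \<Rightarrow> real \<Rightarrow> real \<Rightarrow> (int \<Rightarrow> real \<times> real)
     \<Rightarrow> (int \<Rightarrow> real \<times> real) \<Rightarrow> (int \<Rightarrow> real \<times> real) \<Rightarrow> bool" where
  "conjugate ae be ac bc P Q P' \<longleftrightarrow> (\<forall>i. alpha_map ae be ac bc (Q i) = P' i)"

end

theory Submission imports Defs begin

definition pol :: "real \<Rightarrow> real \<Rightarrow> real \<times> real \<Rightarrow> real \<times> real \<Rightarrow> real" where
  "pol a b Q X = fst X * fst Q / a^2 + snd X * snd Q / b^2"

lemma tangent_pol:
  assumes "tangent_at a b X Y Q"
  shows "on_ellipse a b Q \<and> pol a b Q X = 1 \<and> pol a b Q Y = 1"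
proof -
  have e: "on_ellipse a b Q"
    and o: "(fst Y - fst X) * fst Q / a^2 + (snd Y - snd X) * snd Q / b^2 = 0"
    and "Q \<in> line_through X Y"
    using assms unfolding tangent_at_def by auto
  then obtain t where Q: "Q = X + t *\<^sub>R (Y - X)" unfolding line_through_def by auto
  have qq: "pol a b Q Q = 1" using e unfolding on_ellipse_def pol_def
    by (simp add: power2_eq_square)
  have d: "pol a b Q Y = pol a b Q X" using o unfolding pol_def by (simp add: algebra_simps diff_divide_distrib add_divide_distrib)
  have "pol a b Q Q = pol a b Q X + t * (pol a b Q Y - pol a b Q X)"
    unfolding pol_def by (subst (1 2) Q) (simp add: algebra_simps diff_divide_distrib add_divide_distrib)
  with qq d have "pol a b Q X = 1" by simp
  with d e show ?thesis by simp
qed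

lemma cross0:
  fixes u1 u2 v1 v2 n1 n2 :: real
  assumes "n1 * u1 + n2 * u2 = 0" "n1 * v1 + n2 * v2 = 0" "n1 \<noteq> 0 \<or> n2 \<noteq> 0"
  shows "u1 * v2 = u2 * v1"
proof (cases "n1 = 0")
  case True
  with assms have "u2 = 0" "v2 = 0" by auto
  then show ?thesis by simp
next
  case False
  then have "u1 = - n2 * u2 / n1" "v1 = - n2 * v2 / n1" using assms(1,2)
    by (simp_all add: field_simps)
  then show ?thesis by (simp add: field_simps)
qed

lemma line_eq:
  assumes "A \<noteq> B" "pol a b Q A = 1" "pol a b Q B = 1" "on_ellipse a b Q"
  shows "line_through A B = {X. pol a b Q X = 1}"
proof
  show "line_through A B \<subseteq> {X. pol a b Q X = 1}"
  proof
    fix X assume "X \<in> line_through A B"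
    then obtain t where X: "X = A + t *\<^sub>R (B - A)" unfolding line_through_def by auto
    have "pol a b Q X = pol a b Q A + t * (pol a b Q B - pol a b Q A)"
      unfolding pol_def X by (simp add: algebra_simps diff_divide_distrib add_divide_distrib)
    with assms show "X \<in> {X. pol a b Q X = 1}" by simp
  qed
next
  show "{X. pol a b Q X = 1} \<subseteq> line_through A B"
  proof
    fix X assume "X \<in> {X. pol a b Q X = 1}"
    then have pX: "pol a b Q X = 1" by simp
    define n1 where "n1 = fst Q / a^2"
    define n2 where "n2 = snd Q / b^2"
    define u1 where "u1 = fst B - fst A"
    define u2 where "u2 = snd B - snd A"
    define v1 where "v1 = fst X - fst A"
    define v2 where "v2 = snd X - snd A"
    have pe: "pol a b Q Y = fst Y * n1 + snd Y * n2" for Y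
      unfolding pol_def n1_def n2_def by simp
    have hu: "n1 * u1 + n2 * u2 = 0" using assms(2,3) pe[of A] pe[of B]
      unfolding u1_def u2_def by (simp add: algebra_simps)
    have hv: "n1 * v1 + n2 * v2 = 0" using assms(2) pX pe[of A] pe[of X]
      unfolding v1_def v2_def by (simp add: algebra_simps)
    have nn: "n1 \<noteq> 0 \<or> n2 \<noteq> 0"
    proof (rule ccontr)
      assume "\<not> ?thesis"
      then have "n1 = 0" "n2 = 0" by auto
      then have "pol a b Q Q = 0" using pe[of Q] by simp
      moreover have "pol a b Q Q = 1" using assms(4) unfolding on_ellipse_def pol_def
        by (simp add: power2_eq_square)
      ultimately show False by simp
    qed
    have cr: "u1 * v2 = u2 * v1" using cross0[OF hu hv nn] .
    have u0: "u1^2 + u2^2 \<noteq> 0" using assms(1) unfolding u1_def u2_def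
      by (auto simp: prod_eq_iff)
    define t where "t = (v1 * u1 + v2 * u2) / (u1^2 + u2^2)"
    have c2: "v2 * u2 * u1 = v1 * u2 * u2"
    proof -
      have "v2 * u2 * u1 = u2 * (u1 * v2)" by (simp add: algebra_simps)
      also have "\<dots> = u2 * (u2 * v1)" using cr by simp
      also have "\<dots> = v1 * u2 * u2" by (simp add: algebra_simps)
      finally show ?thesis .
    qed
    have c3: "v2 * u1 * u1 = v1 * u2 * u1"
    proof -
      have "v2 * u1 * u1 = u1 * (u1 * v2)" by (simp add: algebra_simps)
      also have "\<dots> = u1 * (u2 * v1)" using cr by simp
      also have "\<dots> = v1 * u2 * u1" by (simp add: algebra_simps)
      finally show ?thesis .
    qed
    have e1: "v1 * (u1^2+u2^2) = (v1 * u1+v2 * u2) * u1"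
    proof -
      have "v1 * (u1^2+u2^2) = v1 * u1 * u1 + v1 * u2 * u2" by (simp add: power2_eq_square algebra_simps)
      also have "\<dots> = v1 * u1 * u1 + v2 * u2 * u1" using c2 by linarith
      also have "\<dots> = (v1 * u1+v2 * u2) * u1" by (simp add: algebra_simps)
      finally show ?thesis .
    qed
    have e2: "v2 * (u1^2+u2^2) = (v1 * u1+v2 * u2) * u2"
    proof -
      have "v2 * (u1^2+u2^2) = v2 * u1 * u1 + v2 * u2 * u2" by (simp add: power2_eq_square algebra_simps)
      also have "\<dots> = v1 * u2 * u1 + v2 * u2 * u2" using c3 by linarith
      also have "\<dots> = (v1 * u1+v2 * u2) * u2" by (simp add: algebra_simps)
      finally show ?thesis .
    qed
    have "v1 = t * u1" unfolding t_def using u0 e1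
      by (metis eq_divide_eq times_divide_eq_left)
    moreover have "v2 = t * u2" unfolding t_def using u0 e2
      by (metis eq_divide_eq times_divide_eq_left)
    ultimately have "X = A + t *\<^sub>R (B - A)"
      unfolding u1_def u2_def v1_def v2_def by (simp add: prod_eq_iff algebra_simps)
    then show "X \<in> line_through A B" unfolding line_through_def by auto
  qed
qed

lemma pol_self_eq:
  assumes "on_ellipse a b Q" "on_ellipse a b R" "pol a b Q R = 1" "a \<noteq> 0" "b \<noteq> 0"
  shows "Q = R"
proof -
  have id: "(fst Q - fst R)^2 / a^2 + (snd Q - snd R)^2 / b^2 =
     ((fst Q)^2/a^2 + (snd Q)^2/b^2) + ((fst R)^2/a^2 + (snd R)^2/b^2)
      - 2 * (fst R * fst Q / a^2 + snd R * snd Q / b^2)"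
    using assms(4,5) by (simp add: field_simps power2_eq_square)
  have "(fst Q - fst R)^2 / a^2 + (snd Q - snd R)^2 / b^2 = 0"
    unfolding id using assms(1,2,3) unfolding on_ellipse_def pol_def by simp
  moreover have "(fst Q - fst R)^2 / a^2 \<ge> 0" "(snd Q - snd R)^2 / b^2 \<ge> 0" by auto
  ultimately have "(fst Q - fst R)^2 / a^2 = 0" "(snd Q - snd R)^2 / b^2 = 0" by linarith+
  with assms show ?thesis by (simp add: prod_eq_iff)
qed


lemma pol_sym:
  "pol ac bc Q (alpha_map ae be ac bc R) = pol ac bc R (alpha_map ae be ac bc Q)"
  unfolding pol_def alpha_map_def by (simp add: algebra_simps)

lemma pol_self: "on_ellipse a b Q \<Longrightarrow> pol a b Q Q = 1"
  unfolding on_ellipse_def pol_def by (simp add: power2_eq_square)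

lemma alpha_on:
  assumes "on_ellipse ac bc Q" "ac \<noteq> 0" "bc \<noteq> 0" "ae \<noteq> 0" "be \<noteq> 0"
  shows "on_ellipse ae be (alpha_map ae be ac bc Q)"
  using assms unfolding on_ellipse_def alpha_map_def by (simp add: power_divide power_mult_distrib)

lemma alpha_inj:
  assumes "alpha_map ae be ac bc X = alpha_map ae be ac bc Y" "ac \<noteq> 0" "bc \<noteq> 0" "ae \<noteq> 0" "be \<noteq> 0"
  shows "X = Y"
  using assms unfolding alpha_map_def by (simp add: prod_eq_iff)

lemma ivory:
  fixes ac bc ke ae be :: real
  assumes "ac \<noteq> 0" "bc \<noteq> 0" "ae^2 = ac^2 + ke" "be^2 = bc^2 + ke"
    and "on_ellipse ac bc Q" "on_ellipse ac bc R"
  shows "dist (alpha_map ae be ac bc R) Q = dist (alpha_map ae be ac bc Q) R"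
proof -
  obtain q1 q2 where Q: "Q = (q1, q2)" by (cases Q)
  obtain r1 r2 where R: "R = (r1, r2)" by (cases R)
  have hq: "q1^2 / ac^2 + q2^2 / bc^2 = 1" using assms(5) unfolding Q on_ellipse_def by simp
  have hr: "r1^2 / ac^2 + r2^2 / bc^2 = 1" using assms(6) unfolding R on_ellipse_def by simp
  have "(ae / ac * r1 - q1)^2 + (be / bc * r2 - q2)^2 - ((ae / ac * q1 - r1)^2 + (be / bc * q2 - r2)^2)
      = (ae^2 / ac^2 - 1) * (r1^2 - q1^2) + (be^2 / bc^2 - 1) * (r2^2 - q2^2)"
    by (simp add: power2_eq_square power_divide algebra_simps diff_divide_distrib add_divide_distrib)
  also have "\<dots> = ke * (r1^2 / ac^2 + r2^2 / bc^2) - ke * (q1^2 / ac^2 + q2^2 / bc^2)"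
    using assms(1-4) by (simp add: field_simps)
  also have "\<dots> = 0" using hq hr by simp
  finally have "(ae / ac * r1 - q1)^2 + (be / bc * r2 - q2)^2 = (ae / ac * q1 - r1)^2 + (be / bc * q2 - r2)^2"
    by simp
  then show ?thesis unfolding Q R alpha_map_def by (simp add: dist_Pair_Pair dist_real_def)
qed

theorem lemma3p11:
  fixes ac bc ke ae be :: real
    and P Q :: "int \<Rightarrow> real \<times> real"
  assumes "ac > bc" and "bc > 0" and "ke > 0"
    and "ae > 0" and "be > 0"
    and "ae^2 = ac^2 + ke" and "be^2 = bc^2 + ke"
    and "billiard ae be ac bc P"
    and "\<forall>i. tangent_at ac bc (P i) (P (i + 1)) (Q i)"
  shows "(\<exists>!P'. billiard ae be ac bc P' \<and> conjugate ae be ac bc P Q P')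
    \<and> billiard ae be ac bc (\<lambda>i. alpha_map ae be ac bc (Q i))
    \<and> (\<forall>Q'. (\<forall>i. tangent_at ac bc (alpha_map ae be ac bc (Q i))
                                   (alpha_map ae be ac bc (Q (i + 1))) (Q' i)) \<longrightarrow>
         (\<forall>i. alpha_map ae be ac bc (Q' (i - 1)) = P i
            \<and> dist (P i) (Q i) = dist (alpha_map ae be ac bc (Q i)) (Q' (i - 1))
            \<and> dist (P i) (Q (i - 1)) = dist (alpha_map ae be ac bc (Q (i - 1))) (Q' (i - 1))))"
proof -
  have ac0: "ac \<noteq> 0" and bc0: "bc \<noteq> 0" and ae0: "ae \<noteq> 0" and be0: "be \<noteq> 0"
    using assms(1-5) by auto
  define al where "al = alpha_map ae be ac bc"
  define R where "R = (\<lambda>i. (ac / ae * fst (P i), bc / be * snd (P i)))"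
  have Pon: "on_ellipse ae be (P i)" for i using assms(8) unfolding billiard_def by auto
  have Pne: "P (i + 1) \<noteq> P i" for i using assms(8) unfolding billiard_def by auto
  have Pline: "line_through (P (i - 1)) (P i) \<noteq> line_through (P i) (P (i + 1))" for i
    using assms(8) unfolding billiard_def by auto
  have QT: "on_ellipse ac bc (Q i) \<and> pol ac bc (Q i) (P i) = 1 \<and> pol ac bc (Q i) (P (i + 1)) = 1" for i
    using tangent_pol assms(9) by blast
  have Ron: "on_ellipse ac bc (R i)" for i
    using Pon[of i] ac0 bc0 ae0 be0 unfolding R_def on_ellipse_def
    by (simp add: power_divide power_mult_distrib)
  have alR: "al (R i) = P i" for i
    unfolding al_def R_def alpha_map_def using ac0 bc0 ae0 be0 by (simp add: prod_eq_iff)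
  have RPol: "pol ac bc (R i) (al (Q j)) = pol ac bc (Q j) (P i)" for i j
    using pol_sym[of ac bc "Q j" ae be "R i"] alR[of i] unfolding al_def by simp
  have Qne: "Q i \<noteq> Q (i + 1)" for i
  proof
    assume eq: "Q i = Q (i + 1)"
    have "line_through (P i) (P (i + 1)) = {X. pol ac bc (Q i) X = 1}"
      using line_eq[of "P i" "P (i+1)" ac bc "Q i"] Pne[of i] QT[of i] by auto
    moreover have "line_through (P (i + 1)) (P (i + 1 + 1)) = {X. pol ac bc (Q i) X = 1}"
      using line_eq[of "P (i+1)" "P (i+1+1)" ac bc "Q i"] Pne[of "i+1"] QT[of "i+1"] eq by auto
    moreover have "line_through (P (i + 1 - 1)) (P (i + 1)) \<noteq> line_through (P (i + 1)) (P (i + 1 + 1))"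
      using Pline[of "i+1"] .
    ultimately show False by simp
  qed
  have alQne: "al (Q i) \<noteq> al (Q (i + 1))" for i
    using Qne[of i] alpha_inj[OF _ ac0 bc0 ae0 be0] unfolding al_def by blast
  have lineR: "line_through (al (Q i)) (al (Q (i + 1))) = {X. pol ac bc (R (i + 1)) X = 1}" for i
    using line_eq[OF alQne[of i], of ac bc "R (i+1)"] RPol[of "i+1" i] RPol[of "i+1" "i+1"] QT[of i] QT[of "i+1"] Ron[of "i+1"]
    by auto
  have tanR: "tangent_at ac bc (al (Q i)) (al (Q (i + 1))) (R (i + 1))" for i
  proof -
    have "R (i + 1) \<in> line_through (al (Q i)) (al (Q (i + 1)))"
      unfolding lineR using pol_self[OF Ron[of "i+1"]] by simp
    moreover have "pol ac bc (R (i + 1)) (al (Q (i + 1))) - pol ac bc (R (i + 1)) (al (Q i)) = 0"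
      using RPol[of "i+1" i] RPol[of "i+1" "i+1"] QT[of i] QT[of "i+1"] by simp
    then have "(fst (al (Q (i + 1))) - fst (al (Q i))) * fst (R (i + 1)) / ac^2 +
        (snd (al (Q (i + 1))) - snd (al (Q i))) * snd (R (i + 1)) / bc^2 = 0"
      unfolding pol_def by (simp add: algebra_simps diff_divide_distrib add_divide_distrib)
    ultimately show ?thesis unfolding tangent_at_def using Ron by blast
  qed
  have bil: "billiard ae be ac bc (\<lambda>i. al (Q i))"
    unfolding billiard_def
  proof (intro conjI allI)
    fix i
    show "on_ellipse ae be (al (Q i))" unfolding al_def using alpha_on QT ac0 bc0 ae0 be0 by blast
    show "al (Q (i + 1)) \<noteq> al (Q i)" using alQne[of i] by metis
    show "\<exists>Q'. tangent_at ac bc (al (Q i)) (al (Q (i + 1))) Q'" using tanR by blast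
    show "line_through (al (Q (i - 1))) (al (Q i)) \<noteq> line_through (al (Q i)) (al (Q (i + 1)))"
    proof
      assume eq: "line_through (al (Q (i - 1))) (al (Q i)) = line_through (al (Q i)) (al (Q (i + 1)))"
      have "line_through (al (Q (i - 1))) (al (Q (i - 1 + 1))) = {X. pol ac bc (R (i - 1 + 1)) X = 1}"
        by (rule lineR)
      then have l1: "line_through (al (Q (i - 1))) (al (Q i)) = {X. pol ac bc (R i) X = 1}" by simp
      have "R (i + 1) \<in> {X. pol ac bc (R i) X = 1}"
        using eq l1 lineR[of i] pol_self[OF Ron[of "i+1"]] by auto
      then have "R i = R (i + 1)" using pol_self_eq[OF Ron[of i] Ron[of "i+1"] _ ac0 bc0] by simp
      then have "P i = P (i + 1)" using alR by metis
      then show False using Pne[of i] by simp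
    qed
  qed
  have part3: "\<forall>Q'. (\<forall>i. tangent_at ac bc (al (Q i)) (al (Q (i + 1))) (Q' i)) \<longrightarrow>
         (\<forall>i. al (Q' (i - 1)) = P i
            \<and> dist (P i) (Q i) = dist (al (Q i)) (Q' (i - 1))
            \<and> dist (P i) (Q (i - 1)) = dist (al (Q (i - 1))) (Q' (i - 1)))"
  proof (intro allI impI)
    fix Q' i
    assume T: "\<forall>i. tangent_at ac bc (al (Q i)) (al (Q (i + 1))) (Q' i)"
    have Q'R: "Q' j = R (j + 1)" for j
    proof -
      have t: "on_ellipse ac bc (Q' j) \<and> pol ac bc (Q' j) (al (Q j)) = 1 \<and> pol ac bc (Q' j) (al (Q (j + 1))) = 1"
        using tangent_pol T by blast
      have "line_through (al (Q j)) (al (Q (j + 1))) = {X. pol ac bc (Q' j) X = 1}"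
        using line_eq[OF alQne[of j], of ac bc "Q' j"] t by auto
      then have "R (j + 1) \<in> {X. pol ac bc (Q' j) X = 1}"
        using lineR[of j] pol_self[OF Ron[of "j+1"]] by auto
      then show ?thesis using pol_self_eq[OF _ Ron[of "j+1"] _ ac0 bc0] t by simp
    qed
    have Q'i: "Q' (i - 1) = R i" using Q'R[of "i-1"] by simp
    have d1: "dist (P i) (Q i) = dist (al (Q i)) (Q' (i - 1))"
      unfolding Q'i using ivory[OF ac0 bc0 assms(6,7) QT[THEN conjunct1] Ron, of i i] alR[of i]
      unfolding al_def by simp
    have d2: "dist (P i) (Q (i - 1)) = dist (al (Q (i - 1))) (Q' (i - 1))"
      unfolding Q'i using ivory[OF ac0 bc0 assms(6,7) QT[THEN conjunct1] Ron, of i "i - 1"] alR[of i]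
      unfolding al_def by simp
    show "al (Q' (i - 1)) = P i \<and> dist (P i) (Q i) = dist (al (Q i)) (Q' (i - 1))
            \<and> dist (P i) (Q (i - 1)) = dist (al (Q (i - 1))) (Q' (i - 1))"
      using Q'i alR d1 d2 by simp
  qed
  have uniq: "\<exists>!P'. billiard ae be ac bc P' \<and> conjugate ae be ac bc P Q P'"
  proof
    show "billiard ae be ac bc (\<lambda>i. al (Q i)) \<and> conjugate ae be ac bc P Q (\<lambda>i. al (Q i))"
      using bil unfolding conjugate_def al_def by simp
  next
    fix P' assume "billiard ae be ac bc P' \<and> conjugate ae be ac bc P Q P'"
    then show "P' = (\<lambda>i. al (Q i))" unfolding conjugate_def al_def by auto
  qed
  show ?thesis using uniq bil part3 unfolding al_def by simp
qed

end
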